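(* Let $n\in\mathbb{N}_0$. For each $\mathrm{Z}\in\{\mathrm{I},\mathrm{II},\mathrm{III}\}$, the system $(\gamma^{\mathrm{Z}}b_{n,k})_{k=0}^n$ is a basis of $\mathbb{P}_n([0,1])$ (polynomials of degree $\le n$ on $[0,1]$).
   Context: $\widehat T$ is the triangle with vertices $(0,0),(1,0),(0,1)$. $P_m^{(\alpha,\beta)}$ are the Jacobi polynomials (orthogonal on $[-1,1]$ w.r.t. $(1-x)^\alpha(1+x)^\beta$, normalized by $P_m^{(\alpha,\beta)}(1)=(\alpha+1)_m/m!$), and $P_k^{(0,0)}$ the Legendre polynomials. For $0\le k\le n$, $b_{n,k}(x_1,x_2):=(x_1+x_2)^k P^{(0,2k+1)}_{n-k}(2(x_1+x_2)-1)\,P_k^{(0,0)}\!\left(\frac{x_1-x_2}{x_1+x_2}\right)$ (a polynomial of degree $n$). The restriction operators are $\gamma^{\mathrm{I}}u:=u(\cdot,0)$, $\gamma^{\mathrm{II}}u:=u(0,\cdot)$, $\gamma^{\mathrm{III}}u:=u(1-\cdot,\cdot)$, mapping functions on $\widehat T$ to functions on $[0,1]$. *)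

theory Defs
  imports "HOL-Analysis.Analysis" "HOL-Computational_Algebra.Polynomial"
begin

text \<open>Jacobi polynomials P_m^(alpha,beta) via the classical explicit formula;
  normalization P_m^(alpha,beta)(1) = (m+alpha choose m) = (alpha+1)_m / m!.\<close>
definition jacobi :: "nat \<Rightarrow> real \<Rightarrow> real \<Rightarrow> real \<Rightarrow> real" where
  "jacobi m \<alpha> \<beta> x =
     (\<Sum>s\<le>m. ((of_nat m + \<alpha>) gchoose (m - s)) * ((of_nat m + \<beta>) gchoose s)
              * ((x - 1) / 2) ^ s * ((x + 1) / 2) ^ (m - s))"

definition legendre :: "nat \<Rightarrow> real \<Rightarrow> real" where
  "legendre k x = jacobi k 0 0 x"

text \<open>At x1+x2 = 0 (only the origin on the triangle) the factor
  (x1+x2)^k vanishes for k>0, and for k=0 the Legendre factor is 1, so the pointwise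
  formula agrees with the polynomial b_{n,k} everywhere on the triangle.\<close>
definition bnk :: "nat \<Rightarrow> nat \<Rightarrow> real \<Rightarrow> real \<Rightarrow> real" where
  "bnk n k x1 x2 = (x1 + x2) ^ k * jacobi (n - k) 0 (2 * of_nat k + 1) (2 * (x1 + x2) - 1)
                    * legendre k ((x1 - x2) / (x1 + x2))"

definition gammaI :: "(real \<Rightarrow> real \<Rightarrow> real) \<Rightarrow> real \<Rightarrow> real" where
  "gammaI u t = u t 0"
definition gammaII :: "(real \<Rightarrow> real \<Rightarrow> real) \<Rightarrow> real \<Rightarrow> real" where
  "gammaII u t = u 0 t"
definition gammaIII :: "(real \<Rightarrow> real \<Rightarrow> real) \<Rightarrow> real \<Rightarrow> real" where
  "gammaIII u t = u (1 - t) t"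

definition is_basis_Pn01 :: "nat \<Rightarrow> (nat \<Rightarrow> real \<Rightarrow> real) \<Rightarrow> bool" where
  "is_basis_Pn01 n f \<longleftrightarrow>
     (\<forall>k\<le>n. \<exists>p :: real poly. degree p \<le> n \<and> (\<forall>t\<in>{0..1}. f k t = poly p t)) \<and>
     (\<forall>c :: nat \<Rightarrow> real. (\<forall>t\<in>{0..1}. (\<Sum>k\<le>n. c k * f k t) = 0) \<longrightarrow> (\<forall>k\<le>n. c k = 0)) \<and>
     (\<forall>q :: real poly. degree q \<le> n \<longrightarrow>
        (\<exists>c :: nat \<Rightarrow> real. \<forall>t\<in>{0..1}. poly q t = (\<Sum>k\<le>n. c k * f k t)))"

end

theory Submission imports Defs begin

lemma tri_low_uniq:
  fixes M :: "nat \<Rightarrow> nat \<Rightarrow> real"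
  assumes diag: "\<forall>k\<le>n. M k k \<noteq> 0" and low: "\<forall>k\<le>n. \<forall>j<k. M k j = 0"
    and h: "\<forall>j\<le>n. (\<Sum>k\<le>n. c k * M k j) = 0"
  shows "\<forall>k\<le>n. c k = 0"
proof -
  have "k \<le> n \<longrightarrow> c k = 0" for k
  proof (induction k rule: less_induct)
    case (less k)
    show ?case
    proof
      assume kn: "k \<le> n"
      have "(\<Sum>i\<le>n. c i * M i k) = (\<Sum>i\<in>{k}. c i * M i k)"
      proof (rule sum.mono_neutral_right)
        show "\<forall>i\<in>{..n} - {k}. c i * M i k = 0"
        proof
          fix i assume i: "i \<in> {..n} - {k}"
          show "c i * M i k = 0"
          proof (cases "i < k")
            case True then show ?thesis using less kn by auto
          next
            case False then have "k < i" using i by auto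
            then show ?thesis using low i by auto
          qed
        qed
      qed (use kn in auto)
      then have "c k * M k k = 0" using h kn by auto
      then show "c k = 0" using diag kn by auto
    qed
  qed
  then show ?thesis by blast
qed

lemma tri_low_solv:
  fixes M :: "nat \<Rightarrow> nat \<Rightarrow> real"
  assumes diag: "\<forall>k\<le>n. M k k \<noteq> 0" and low: "\<forall>k\<le>n. \<forall>j<k. M k j = 0"
  shows "\<exists>c. \<forall>j\<le>n. (\<Sum>k\<le>n. c k * M k j) = d j"
  using assms
proof (induction n)
  case 0
  then show ?case by (intro exI[of _ "\<lambda>k. d 0 / M 0 0"]) auto
next
  case (Suc n)
  then obtain c where c: "\<forall>j\<le>n. (\<Sum>k\<le>n. c k * M k j) = d j" by auto
  define c' where "c' = c(Suc n := (d (Suc n) - (\<Sum>k\<le>n. c k * M k (Suc n))) / M (Suc n) (Suc n))"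
  have eq: "(\<Sum>k\<le>Suc n. c' k * M k j) = (\<Sum>k\<le>n. c k * M k j) + c' (Suc n) * M (Suc n) j" for j
    unfolding c'_def by (auto intro!: sum.cong)
  show ?case
  proof (intro exI allI impI)
    fix j assume j: "j \<le> Suc n"
    show "(\<Sum>k\<le>Suc n. c' k * M k j) = d j"
    proof (cases "j = Suc n")
      case True then show ?thesis using Suc.prems unfolding eq by (simp add: c'_def)
    next
      case False then have "j \<le> n" "j < Suc n" using j by auto
      then show ?thesis using c Suc.prems unfolding eq by auto
    qed
  qed
qed

lemma sum_rev_atMost: "(\<Sum>k\<le>n. g (n - k)) = (\<Sum>k\<le>(n::nat). (g k :: real))"
  using sum.atLeastAtMost_rev[of g 0 n] by (simp add: atMost_atLeast0)

lemma tri_up_uniq: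
  fixes M :: "nat \<Rightarrow> nat \<Rightarrow> real"
  assumes diag: "\<forall>k\<le>n. M k k \<noteq> 0" and up: "\<forall>k\<le>n. \<forall>j. k < j \<longrightarrow> M k j = 0"
    and h: "\<forall>j\<le>n. (\<Sum>k\<le>n. c k * M k j) = 0"
  shows "\<forall>k\<le>n. c k = 0"
proof -
  have "\<forall>k\<le>n. c (n - k) = 0"
  proof (rule tri_low_uniq[of n "\<lambda>k j. M (n-k) (n-j)"])
    show "\<forall>k\<le>n. M (n - k) (n - k) \<noteq> 0" using diag by (meson diff_le_self)
    show "\<forall>k\<le>n. \<forall>j<k. M (n - k) (n - j) = 0" using up by auto
    show "\<forall>j\<le>n. (\<Sum>k\<le>n. c (n - k) * M (n - k) (n - j)) = 0"
    proof (intro allI impI)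
      fix j assume "j \<le> n"
      then show "(\<Sum>k\<le>n. c (n - k) * M (n - k) (n - j)) = 0"
        using sum_rev_atMost[of "\<lambda>k. c k * M k (n-j)" n] h by auto
    qed
  qed
  then show ?thesis by (metis diff_diff_cancel diff_le_self)
qed

lemma tri_up_solv:
  fixes M :: "nat \<Rightarrow> nat \<Rightarrow> real"
  assumes diag: "\<forall>k\<le>n. M k k \<noteq> 0" and up: "\<forall>k\<le>n. \<forall>j. k < j \<longrightarrow> M k j = 0"
  shows "\<exists>c. \<forall>j\<le>n. (\<Sum>k\<le>n. c k * M k j) = d j"
proof -
  have d1: "\<forall>k\<le>n. M (n - k) (n - k) \<noteq> 0" using diag by (meson diff_le_self)
  have d2: "\<forall>k\<le>n. \<forall>j<k. M (n - k) (n - j) = 0" using up by auto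
  obtain c where c: "\<forall>j\<le>n. (\<Sum>k\<le>n. c k * M (n-k) (n-j)) = d (n-j)"
    using tri_low_solv[of n "\<lambda>k j. M (n-k) (n-j)" "\<lambda>j. d (n-j)", OF d1 d2] by blast
  show ?thesis
  proof (intro exI allI impI)
    fix j assume j: "j \<le> n"
    have e1: "(\<Sum>k\<le>n. c k * M (n-k) j) = (\<Sum>k\<le>n. c (n-(n-k)) * M (n-k) j)"
      by (rule sum.cong) auto
    have "(\<Sum>k\<le>n. c (n-k) * M k j) = (\<Sum>k\<le>n. c k * M (n-k) j)"
      unfolding e1 using sum_rev_atMost[of "\<lambda>k. c (n-k) * M k j" n] by simp
    also have "\<dots> = d j" using c[rule_format, of "n-j"] j by auto
    finally show "(\<Sum>k\<le>n. c (n-k) * M k j) = d j" .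
  qed
qed


lemma poly_zero_on_01:
  fixes P :: "real poly"
  assumes "\<forall>t\<in>{0..1}. poly P t = 0" shows "P = 0"
proof (rule ccontr)
  assume "P \<noteq> 0"
  then have "finite {x. poly P x = 0}" by (rule poly_roots_finite)
  moreover have "{0..1::real} \<subseteq> {x. poly P x = 0}" using assms by auto
  ultimately have "finite {0..1::real}" by (rule finite_subset[rotated])
  then show False using infinite_Icc[of "0::real" 1] by simp
qed

lemma basis_from_polys:
  fixes p :: "nat \<Rightarrow> real poly"
  assumes fp: "\<forall>k\<le>n. \<forall>t\<in>{0..1}. f k t = poly (p k) t"
    and dg: "\<forall>k\<le>n. degree (p k) \<le> n"
    and solv: "\<And>d. \<exists>c. \<forall>j\<le>n. (\<Sum>k\<le>n. c k * coeff (p k) j) = d j"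
    and uniq: "\<And>c. \<forall>j\<le>n. (\<Sum>k\<le>n. c k * coeff (p k) j) = 0 \<Longrightarrow> \<forall>k\<le>n. c k = 0"
  shows "is_basis_Pn01 n f"
  unfolding is_basis_Pn01_def
proof (intro conjI allI impI)
  fix k assume "k \<le> n"
  then show "\<exists>p. degree p \<le> n \<and> (\<forall>t\<in>{0..1}. f k t = poly p t)" using fp dg by blast
next
  fix c kk assume h: "\<forall>t\<in>{0..1}. (\<Sum>k\<le>n. c k * f k t) = 0" and kk: "kk \<le> n"
  define P where "P = (\<Sum>k\<le>n. smult (c k) (p k))"
  have "\<forall>t\<in>{0..1}. poly P t = 0"
  proof
    fix t :: real assume t: "t \<in> {0..1}"
    have "poly P t = (\<Sum>k\<le>n. c k * f k t)" unfolding P_def poly_sum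
      using fp t by (auto intro!: sum.cong)
    then show "poly P t = 0" using h t by auto
  qed
  then have "P = 0" by (rule poly_zero_on_01)
  then have "\<forall>j\<le>n. (\<Sum>k\<le>n. c k * coeff (p k) j) = 0"
  proof (intro allI impI)
    fix j
    have "coeff P j = (\<Sum>k\<le>n. c k * coeff (p k) j)" unfolding P_def by (simp add: coeff_sum)
    then show "(\<Sum>k\<le>n. c k * coeff (p k) j) = 0" using \<open>P = 0\<close> by simp
  qed
  then show "c kk = 0" using uniq kk by blast
next
  fix q :: "real poly" assume q: "degree q \<le> n"
  obtain c where c: "\<forall>j\<le>n. (\<Sum>k\<le>n. c k * coeff (p k) j) = coeff q j" using solv by blast
  define P where "P = (\<Sum>k\<le>n. smult (c k) (p k))"
  have cP: "coeff P j = (\<Sum>k\<le>n. c k * coeff (p k) j)" for j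
    unfolding P_def by (simp add: coeff_sum)
  have "P = q"
  proof (rule poly_eqI)
    fix j show "coeff P j = coeff q j"
    proof (cases "j \<le> n")
      case True then show ?thesis using c cP by auto
    next
      case False
      then have "coeff q j = 0" using q by (simp add: coeff_eq_0)
      moreover have "coeff (p k) j = 0" if "k \<le> n" for k
        using dg that False by (meson coeff_eq_0 le_trans not_le)
      ultimately show ?thesis unfolding cP by simp
    qed
  qed
  show "\<exists>c. \<forall>t\<in>{0..1}. poly q t = (\<Sum>k\<le>n. c k * f k t)"
  proof (intro exI ballI)
    fix t :: real assume t: "t \<in> {0..1}"
    show "poly q t = (\<Sum>k\<le>n. c k * f k t)" unfolding \<open>P = q\<close>[symmetric] P_def poly_sum
      using fp t by (auto intro!: sum.cong)
  qed
qed


definition jpoly :: "nat \<Rightarrow> real \<Rightarrow> real poly" where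
  "jpoly m \<beta> = (\<Sum>s\<le>m. smult (((of_nat m + 0) gchoose (m - s)) * ((of_nat m + \<beta>) gchoose s))
      ([:-1,1:]^s * [:0,1:]^(m-s)))"

lemma jpoly_eval: "poly (jpoly m \<beta>) t = jacobi m 0 \<beta> (2*t-1)"
proof -
  have a: "(2*t-1-1)/2 = t - 1" "(2*t-1+1)/2 = t" by auto
  show ?thesis unfolding jpoly_def jacobi_def poly_sum a by (simp add: mult.assoc)
qed

lemma jpoly_deg: "degree (jpoly m \<beta>) \<le> m"
  unfolding jpoly_def
proof (rule degree_sum_le[OF finite_atMost])
  fix s assume s: "s \<in> {..m}"
  have "degree ([:-1,1:]^s * [:0::real,1:]^(m-s)) \<le> degree ([:-1,1:]^s :: real poly) + degree ([:0::real,1:]^(m-s))"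
    by (rule degree_mult_le)
  also have "\<dots> = s + (m - s)" by (simp add: degree_linear_power)
  also have "\<dots> = m" using s by auto
  finally show "degree (smult (((of_nat m + 0) gchoose (m - s)) * ((of_nat m + \<beta>) gchoose s))
      ([:-1,1:]^s * [:0,1:]^(m-s))) \<le> m"
    by (meson degree_smult_le order_trans)
qed

lemma jpoly_coeff0: "coeff (jpoly m \<beta>) 0 = (-1)^m * ((of_nat m + \<beta>) gchoose m)"
proof -
  have "coeff (jpoly m \<beta>) 0 = poly (jpoly m \<beta>) 0" by (simp add: poly_0_coeff_0)
  also have "\<dots> = (\<Sum>s\<le>m. ((of_nat m + 0) gchoose (m - s)) * ((of_nat m + \<beta>) gchoose s) * (-1)^s * 0^(m-s))"
    unfolding jpoly_def by (simp add: poly_sum mult.assoc)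
  also have "\<dots> = (\<Sum>s\<le>m. if s = m then ((of_nat m + \<beta>) gchoose m) * (-1)^m else 0)"
    by (rule sum.cong) auto
  also have "\<dots> = (-1)^m * ((of_nat m + \<beta>) gchoose m)" by simp
  finally show ?thesis .
qed

lemma gchoose_nat_nz: "((of_nat m + (2 * of_nat k + 1) :: real) gchoose m) \<noteq> 0"
proof -
  have "(of_nat m + (2 * of_nat k + 1) :: real) = of_nat (m + 2*k+1)" by simp
  then have "((of_nat m + (2 * of_nat k + 1) :: real) gchoose m) = of_nat ((m+2*k+1) choose m)"
    by (simp only: binomial_gbinomial)
  then show ?thesis by simp
qed

lemma jacobi_at1: "jacobi m 0 \<beta> 1 = 1"
proof -
  have "jacobi m 0 \<beta> 1 = (\<Sum>s\<le>m. if s = 0 then ((of_nat m + 0) gchoose m) else 0)"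
    unfolding jacobi_def by (rule sum.cong) auto
  also have "\<dots> = 1" using binomial_gbinomial[of m m, where 'a=real] by simp
  finally show ?thesis .
qed

lemma legendre_1: "legendre k 1 = 1"
  unfolding legendre_def by (rule jacobi_at1)

lemma legendre_0: "legendre 0 x = 1"
  unfolding legendre_def jacobi_def by simp

lemma legendre_m1: "legendre k (-1) = (-1)^k"
proof -
  have "legendre k (-1) = (\<Sum>s\<le>k. if s = k then ((of_nat k + 0) gchoose k) * (-1)^k else 0)"
    unfolding legendre_def jacobi_def by (rule sum.cong) auto
  also have "\<dots> = (-1)^k" using binomial_gbinomial[of k k, where 'a=real] by simp
  finally show ?thesis .
qed

definition lpoly :: "nat \<Rightarrow> real poly" where
  "lpoly k = (\<Sum>s\<le>k. smult (((of_nat k + 0) gchoose (k - s)) * ((of_nat k + 0) gchoose s))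
      ([:0,-1:]^s * [:1,-1:]^(k-s)))"

lemma lpoly_eval: "poly (lpoly k) t = legendre k (1 - 2*t)"
proof -
  have a: "(1-2*t-1)/2 = -t" "(1-2*t+1)/2 = 1 - t" by auto
  show ?thesis unfolding lpoly_def legendre_def jacobi_def poly_sum a by (simp add: mult.assoc)
qed

lemma lin_pow_deg: "degree ([:0,-1:]^s * [:1,-1:]^(k-s) :: real poly) = s + (k - s)"
  by (simp add: degree_mult_eq degree_linear_power_neg)

lemma lin_pow_lead: "coeff ([:0,-1:]^s * [:1,-1:]^(k-s) :: real poly) (s + (k - s)) = (-1)^s * (-1)^(k-s)"
proof -
  have "coeff ([:0,-1:]^s * [:1,-1:]^(k-s) :: real poly) (s + (k - s)) =
        lead_coeff ([:0,-1:]^s * [:1,-1:]^(k-s) :: real poly)" using lin_pow_deg by simp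
  also have "\<dots> = (-1)^s * (-1)^(k-s)" by (simp add: lead_coeff_mult lead_coeff_power)
  finally show ?thesis .
qed

lemma lpoly_deg: "degree (lpoly k) \<le> k"
  unfolding lpoly_def
proof (rule degree_sum_le[OF finite_atMost])
  fix s assume s: "s \<in> {..k}"
  then show "degree (smult (((of_nat k + 0) gchoose (k - s)) * ((of_nat k + 0) gchoose s))
      ([:0,-1:]^s * [:1,-1:]^(k-s) :: real poly)) \<le> k"
  proof -
    have "s + (k - s) = k" using s by auto
    then have "degree ([:0,-1:]^s * [:1,-1:]^(k-s) :: real poly) = k" using lin_pow_deg[of s k] by simp
    moreover have "degree (smult (((of_nat k + 0) gchoose (k - s)) * ((of_nat k + 0) gchoose s))
      ([:0,-1:]^s * [:1,-1:]^(k-s) :: real poly)) \<le> degree ([:0,-1:]^s * [:1,-1:]^(k-s) :: real poly)"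
      by (rule degree_smult_le)
    ultimately show ?thesis by simp
  qed
qed

lemma lpoly_lead: "coeff (lpoly k) k \<noteq> 0"
proof -
  define B where "B s = ((of_nat k + 0) gchoose (k - s)) * ((of_nat k + 0 :: real) gchoose s)" for s
  have B: "B s = of_nat (k choose (k-s)) * of_nat (k choose s)" for s
    unfolding B_def by (simp add: binomial_gbinomial)
  have "coeff (lpoly k) k = (\<Sum>s\<le>k. B s * ((-1)^s * (-1)^(k-s)))"
    unfolding lpoly_def coeff_sum B_def
  proof (rule sum.cong)
    fix s assume "s \<in> {..k}"
    then have "s + (k - s) = k" by auto
    then show "coeff (smult (((of_nat k + 0) gchoose (k - s)) * ((of_nat k + 0) gchoose s))
      ([:0,-1:]^s * [:1,-1:]^(k-s) :: real poly)) k = ((of_nat k + 0) gchoose (k - s)) * ((of_nat k + 0) gchoose s) * ((-1)^s * (-1)^(k-s))"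
    proof -
      have h: "coeff ([:0,-1:]^s * [:1,-1:]^(k-s) :: real poly) k = (-1)^s * (-1)^(k-s)"
        using lin_pow_lead[of s k] \<open>s + (k - s) = k\<close> by simp
      show ?thesis by (simp only: coeff_smult h)
    qed
  qed simp
  also have "\<dots> = (\<Sum>s\<le>k. B s * (-1)^k)"
  proof (rule sum.cong)
    fix s assume "s \<in> {..k}"
    then have "s + (k - s) = k" by auto
    then have "(-1::real)^s * (-1)^(k-s) = (-1)^k" by (metis power_add)
    then show "B s * ((-1)^s * (-1)^(k-s)) = B s * (-1)^k" by simp
  qed simp
  also have "\<dots> = (\<Sum>s\<le>k. B s) * (-1)^k" by (rule sum_distrib_right[symmetric])
  also have "\<dots> = (-1)^k * (\<Sum>s\<le>k. B s)" by (rule mult.commute)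
  finally have e: "coeff (lpoly k) k = (-1)^k * (\<Sum>s\<le>k. B s)" .
  have "B 0 \<le> (\<Sum>s\<le>k. B s)"
    by (rule member_le_sum) (auto simp: B)
  moreover have "B 0 = 1" by (simp add: B)
  ultimately have "(\<Sum>s\<le>k. B s) \<noteq> 0" by auto
  then show ?thesis unfolding e by simp
qed


lemma gI: "gammaI (bnk n k) t = t^k * jacobi (n-k) 0 (2 * of_nat k + 1) (2*t-1)"
proof (cases "t = 0")
  case True then show ?thesis
    by (cases k) (simp_all add: gammaI_def bnk_def legendre_0)
next
  case False then show ?thesis by (simp add: gammaI_def bnk_def legendre_1)
qed

lemma gII: "gammaII (bnk n k) t = (-1)^k * (t^k * jacobi (n-k) 0 (2 * of_nat k + 1) (2*t-1))"
proof (cases "t = 0")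
  case True then show ?thesis
    by (cases k) (simp_all add: gammaII_def bnk_def legendre_0)
next
  case False
  then have "(0 - t) / (0 + t) = -1" by simp
  then show ?thesis by (simp add: gammaII_def bnk_def legendre_m1)
qed

lemma gIII: "gammaIII (bnk n k) t = legendre k (1 - 2*t)"
proof -
  have "(1 - t - t) / (1 - t + t) = 1 - 2*t" "2 * (1 - t + t) - 1 = (1::real)" by auto
  then show ?thesis by (simp add: gammaIII_def bnk_def jacobi_at1)
qed

lemma case_low:
  fixes \<sigma> :: "nat \<Rightarrow> real"
  assumes sg: "\<forall>k. \<sigma> k \<noteq> 0"
    and fe: "\<forall>k\<le>n. \<forall>t. f k t = \<sigma> k * (t^k * jacobi (n-k) 0 (2 * of_nat k + 1) (2*t-1))"
  shows "is_basis_Pn01 n f"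
proof -
  define p where "p k = smult (\<sigma> k) (monom 1 k * jpoly (n-k) (2 * of_nat k + 1))" for k
  have fp: "\<forall>k\<le>n. \<forall>t\<in>{0..1}. f k t = poly (p k) t"
    using fe by (simp add: p_def poly_monom jpoly_eval)
  have dg: "\<forall>k\<le>n. degree (p k) \<le> n"
  proof (intro allI impI)
    fix k assume k: "k \<le> n"
    have "degree (p k) \<le> degree (monom 1 k * jpoly (n-k) (2 * of_nat k + 1))"
      unfolding p_def by (rule degree_smult_le)
    also have "\<dots> \<le> degree (monom (1::real) k) + degree (jpoly (n-k) (2 * of_nat k + 1))"
      by (rule degree_mult_le)
    also have "\<dots> \<le> k + (n - k)" using jpoly_deg[of "n-k"] by (simp add: degree_monom_eq)
    finally show "degree (p k) \<le> n" using k by simp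
  qed
  have diag: "\<forall>k\<le>n. coeff (p k) k \<noteq> 0"
  proof (intro allI impI)
    fix k assume "k \<le> n"
    have "coeff (p k) k = \<sigma> k * coeff (jpoly (n-k) (2 * of_nat k + 1)) 0"
      by (simp add: p_def coeff_monom_mult)
    also have "\<dots> = \<sigma> k * ((-1)^(n-k) * ((of_nat (n-k) + (2 * of_nat k + 1)) gchoose (n-k)))"
      by (simp only: jpoly_coeff0)
    finally show "coeff (p k) k \<noteq> 0" using sg gchoose_nat_nz[of "n-k" k] by simp
  qed
  have low: "\<forall>k\<le>n. \<forall>j<k. coeff (p k) j = 0"
    by (simp add: p_def coeff_monom_mult)
  show ?thesis
  proof (rule basis_from_polys[OF fp dg])
    fix d show "\<exists>c. \<forall>j\<le>n. (\<Sum>k\<le>n. c k * coeff (p k) j) = d j"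
      by (rule tri_low_solv[OF diag low])
  next
    fix c assume "\<forall>j\<le>n. (\<Sum>k\<le>n. c k * coeff (p k) j) = 0"
    then show "\<forall>k\<le>n. c k = 0" by (rule tri_low_uniq[OF diag low])
  qed
qed

lemma case_III: "is_basis_Pn01 n (\<lambda>k. gammaIII (bnk n k))"
proof -
  have fp: "\<forall>k\<le>n. \<forall>t\<in>{0..1}. gammaIII (bnk n k) t = poly (lpoly k) t"
    by (simp add: gIII lpoly_eval)
  have dg: "\<forall>k\<le>n. degree (lpoly k) \<le> n" using lpoly_deg order_trans by blast
  have diag: "\<forall>k\<le>n. coeff (lpoly k) k \<noteq> 0" using lpoly_lead by blast
  have up: "\<forall>k\<le>n. \<forall>j. k < j \<longrightarrow> coeff (lpoly k) j = 0"
    using lpoly_deg by (meson coeff_eq_0 le_less_trans)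
  show ?thesis
  proof (rule basis_from_polys[OF fp dg])
    fix d show "\<exists>c. \<forall>j\<le>n. (\<Sum>k\<le>n. c k * coeff (lpoly k) j) = d j"
      by (rule tri_up_solv[OF diag up])
  next
    fix c assume "\<forall>j\<le>n. (\<Sum>k\<le>n. c k * coeff (lpoly k) j) = 0"
    then show "\<forall>k\<le>n. c k = 0" by (rule tri_up_uniq[OF diag up])
  qed
qed

theorem lemma12:
  fixes n :: nat
  shows "\<forall>\<gamma> \<in> {gammaI, gammaII, gammaIII}. is_basis_Pn01 n (\<lambda>k. \<gamma> (bnk n k))"
proof -
  have I: "is_basis_Pn01 n (\<lambda>k. gammaI (bnk n k))"
    by (rule case_low[where \<sigma>="\<lambda>k. 1"]) (simp_all add: gI)
  have II: "is_basis_Pn01 n (\<lambda>k. gammaII (bnk n k))"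
    by (rule case_low[where \<sigma>="\<lambda>k. (-1)^k"]) (simp_all add: gII)
  show ?thesis using I II case_III by simp
qed


end
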